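(* Let $\lambda\in\mathbb{C}$ with $|\lambda|>1$, and let $g,h\in \mathrm{SL}(2,\mathbb{C})$ be $$g=\begin{pmatrix}\lambda&0\\0&\lambda^{-1}\end{pmatrix},\qquad h=\begin{pmatrix}a&b\\c&d\end{pmatrix}.$$ Put $M_g=|\lambda-1|+|\lambda^{-1}-1|$ and suppose $M_g<1$. If $$|abcd|^{1/2}\le \frac{1-M_g}{M_g^2},$$ then the subgroup $\langle g,h\rangle$ is either elementary or not discrete.
   Context: A subgroup of $\mathrm{SL}(2,\mathbb{C})$ is discrete if it is discrete in the matrix topology. It is elementary if its action on $\mathbb{H}^3\cup\partial\mathbb{H}^3$ (via Möbius transformations) has a finite orbit; otherwise it is non-elementary. Since $|\lambda|>1$, $g$ is loxodromic. *)

theory Defs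
  imports "HOL-Analysis.Analysis"
begin

type_synonym cmat2 = "complex^2^2"

definition mat2 :: "complex \<Rightarrow> complex \<Rightarrow> complex \<Rightarrow> complex \<Rightarrow> cmat2" where
  "mat2 a b c d = (\<chi> i j. if i = 1 then (if j = 1 then a else b) else (if j = 1 then c else d))"

definition SL2C :: "cmat2 set" where
  "SL2C = {A. det A = 1}"

inductive_set gen_subgroup :: "cmat2 set \<Rightarrow> cmat2 set" for S where
  gen_base: "A \<in> S \<Longrightarrow> A \<in> gen_subgroup S"
| gen_one: "mat 1 \<in> gen_subgroup S"
| gen_mult: "A \<in> gen_subgroup S \<Longrightarrow> B \<in> gen_subgroup S \<Longrightarrow> A ** B \<in> gen_subgroup S"
| gen_inv: "A \<in> gen_subgroup S \<Longrightarrow> matrix_inv A \<in> gen_subgroup S"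

definition discrete_group :: "cmat2 set \<Rightarrow> bool" where
  "discrete_group G \<longleftrightarrow> discrete G"

text \<open>Points of the closed upper half-space model of H^3 \<union> \<partial>H^3:
  Pt z t with t > 0 is the interior point z + t j, Pt z 0 the boundary point z,
  and Inf the boundary point at infinity.\<close>
datatype hpoint = Inf | Pt complex real

definition hbar :: "hpoint set" where
  "hbar = {Inf} \<union> {Pt z t | z t. t \<ge> 0}"

text \<open>Action of a matrix [[a,b],[c,d]] in SL(2,C) by the Poincare extension
  q \<mapsto> (aq+b)(cq+d)^{-1} (quaternions), which on the boundary is the Moebius map.\<close>
fun mob_act :: "cmat2 \<Rightarrow> hpoint \<Rightarrow> hpoint" where
  "mob_act A Inf =
     (let a = A$1$1; c = A$2$1 in if c = 0 then Inf else Pt (a / c) 0)"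
| "mob_act A (Pt z t) =
     (let a = A$1$1; b = A$1$2; c = A$2$1; d = A$2$2;
          D = (cmod (c*z + d))\<^sup>2 + (cmod c)\<^sup>2 * t\<^sup>2
      in if D = 0 then Inf
         else Pt (((a*z + b) * cnj (c*z + d) + a * cnj c * complex_of_real (t\<^sup>2)) / complex_of_real D)
                 (t / D))"

definition elementary :: "cmat2 set \<Rightarrow> bool" where
  "elementary G \<longleftrightarrow> (\<exists>x\<in>hbar. finite ((\<lambda>A. mob_act A x) ` G))"

end

theory Submission
  imports Defs
begin
lemma mat2_mult: "mat2 a b c d ** mat2 a' b' c' d' = mat2 (a*a'+b*c') (a*b'+b*d') (c*a'+d*c') (c*b'+d*d')"
  unfolding matrix_matrix_mult_def mat2_def by (simp add: vec_eq_iff forall_2 sum_2)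
lemma mat2_eta: "(A::cmat2) = mat2 (A$1$1) (A$1$2) (A$2$1) (A$2$2)"
  unfolding mat2_def by (simp add: vec_eq_iff forall_2)
lemma mat2_nth[simp]: "mat2 a b c d $1$1 = a" "mat2 a b c d $1$2 = b" "mat2 a b c d $2$1 = c" "mat2 a b c d $2$2 = d"
  unfolding mat2_def by simp_all
lemma mat2_one: "mat 1 = mat2 1 0 0 1"
  unfolding mat2_def mat_def by (simp add: vec_eq_iff forall_2)
lemma mat2_det: "det (mat2 a b c d) = a*d - b*c"
  by (simp add: det_2)
lemma mat2_eq: "mat2 a b c d = mat2 a' b' c' d' \<longleftrightarrow> a=a' \<and> b=b' \<and> c=c' \<and> d=d'"
  by (metis mat2_nth)

lemma minv_unique:
  fixes A B :: "'a::comm_ring_1^'n^'n"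
  assumes "A ** B = mat 1" "B ** A = mat 1"
  shows "matrix_inv A = B"
  unfolding matrix_inv_def
proof (rule some_equality)
  show "A ** B = mat 1 \<and> B ** A = mat 1" using assms by simp
next
  fix C assume "A ** C = mat 1 \<and> C ** A = mat 1"
  then have "C = C ** (A ** B)" "C ** A = mat 1" using assms by (auto simp: matrix_mul_rid)
  then show "C = B" by (metis matrix_mul_assoc matrix_mul_lid)
qed

lemma minv2: "a*d - b*c = 1 \<Longrightarrow> matrix_inv (mat2 a b c d) = mat2 d (-b) (-c) a"
  apply (rule minv_unique)
   apply (simp_all add: mat2_mult mat2_one mat2_eq algebra_simps)
  done

lemma minv_det: "det (A::cmat2) = 1 \<Longrightarrow> matrix_inv A = mat2 (A$2$2) (-A$1$2) (-A$2$1) (A$1$1)"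
  by (subst mat2_eta, rule minv2) (simp add: det_2)

lemma gen_det:
  assumes "S \<subseteq> SL2C" "A \<in> gen_subgroup S"
  shows "det A = 1"
  using assms(2)
proof induction
  case (gen_base A) then show ?case using assms(1) by (auto simp: SL2C_def)
next
  case gen_one then show ?case by simp
next
  case (gen_mult A B) then show ?case by (simp add: det_mul)
next
  case (gen_inv A) then show ?case by (simp add: minv_det mat2_det det_2 algebra_simps)
qed

lemma mat2_tendsto:
  assumes "p \<longlonglongrightarrow> p0" "q \<longlonglongrightarrow> q0" "r \<longlonglongrightarrow> r0" "s \<longlonglongrightarrow> s0"
  shows "(\<lambda>n. mat2 (p n) (q n) (r n) (s n)) \<longlonglongrightarrow> mat2 p0 q0 r0 s0"
  unfolding mat2_def
  by (intro tendsto_vec_lambda) (auto simp: assms)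

lemma nondisc:
  assumes "\<And>n. Z n \<in> G" "L \<in> G" "\<And>n. Z n \<noteq> L" "Z \<longlonglongrightarrow> L"
  shows "\<not> discrete_group G"
proof
  assume "discrete_group G"
  then have "L isolated_in G" using assms(2) by (auto simp: discrete_group_def discrete_def)
  then obtain e where e: "e > 0" "\<forall>y\<in>G. dist L y < e \<longrightarrow> y = L"
    by (auto simp: isolated_in_dist_Ex_iff)
  have "eventually (\<lambda>n. dist (Z n) L < e) sequentially"
    using assms(4) e(1) by (rule tendstoD)
  then obtain n where "dist (Z n) L < e" by (auto dest: eventually_happens)
  then show False using e assms(1,3) by (metis dist_commute)
qed

lemma mult_nth: fixes A B :: cmat2 shows
  "(A ** B)$1$1 = A$1$1*B$1$1 + A$1$2*B$2$1" "(A ** B)$1$2 = A$1$1*B$1$2 + A$1$2*B$2$2"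
  "(A ** B)$2$1 = A$2$1*B$1$1 + A$2$2*B$2$1" "(A ** B)$2$2 = A$2$1*B$1$2 + A$2$2*B$2$2"
  by (simp_all add: matrix_matrix_mult_def sum_2)

lemma elem_b0:
  assumes "S \<subseteq> SL2C" "\<forall>X\<in>S. X$1$2 = 0"
  shows "elementary (gen_subgroup S)"
proof -
  have z: "A$1$2 = 0" if "A \<in> gen_subgroup S" for A
    using that
  proof induction
    case (gen_base A) then show ?case using assms by auto
  next
    case gen_one then show ?case by (simp add: mat2_one)
  next
    case (gen_mult A B) then show ?case by (simp add: mult_nth)
  next
    case (gen_inv A) then show ?case using gen_det[OF assms(1)] by (simp add: minv_det)
  qed
  have "mob_act A (Pt 0 0) = Pt 0 0" if "A \<in> gen_subgroup S" for A
  proof -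
    have "det A = 1" "A$1$2 = 0" using gen_det[OF assms(1) that] z[OF that] by auto
    then have "A$2$2 \<noteq> 0" by (auto simp: det_2)
    then show ?thesis using \<open>A$1$2 = 0\<close> by (simp add: Let_def)
  qed
  then have "(\<lambda>A. mob_act A (Pt 0 0)) ` gen_subgroup S \<subseteq> {Pt 0 0}" by auto
  then have "finite ((\<lambda>A. mob_act A (Pt 0 0)) ` gen_subgroup S)" using finite_subset by blast
  moreover have "Pt 0 0 \<in> hbar" by (auto simp: hbar_def)
  ultimately show ?thesis unfolding elementary_def by blast
qed

lemma elem_c0:
  assumes "S \<subseteq> SL2C" "\<forall>X\<in>S. X$2$1 = 0"
  shows "elementary (gen_subgroup S)"
proof -
  have z: "A$2$1 = 0" if "A \<in> gen_subgroup S" for A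
    using that
  proof induction
    case (gen_base A) then show ?case using assms by auto
  next
    case gen_one then show ?case by (simp add: mat2_one)
  next
    case (gen_mult A B) then show ?case by (simp add: mult_nth)
  next
    case (gen_inv A) then show ?case using gen_det[OF assms(1)] by (simp add: minv_det)
  qed
  have "mob_act A Inf = Inf" if "A \<in> gen_subgroup S" for A
    using z[OF that] by (simp add: Let_def)
  then have "(\<lambda>A. mob_act A Inf) ` gen_subgroup S \<subseteq> {Inf}" by auto
  then have "finite ((\<lambda>A. mob_act A Inf) ` gen_subgroup S)" using finite_subset by blast
  moreover have "Inf \<in> hbar" by (auto simp: hbar_def)
  ultimately show ?thesis unfolding elementary_def by blast
qed

lemma elem_swap:
  assumes "S \<subseteq> SL2C" "\<forall>X\<in>S. (X$1$2 = 0 \<and> X$2$1 = 0) \<or> (X$1$1 = 0 \<and> X$2$2 = 0)"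
  shows "elementary (gen_subgroup S)"
proof -
  have z: "(A$1$2 = 0 \<and> A$2$1 = 0) \<or> (A$1$1 = 0 \<and> A$2$2 = 0)" if "A \<in> gen_subgroup S" for A
    using that
  proof induction
    case (gen_base A) then show ?case using assms by auto
  next
    case gen_one then show ?case by (simp add: mat2_one)
  next
    case (gen_mult A B) then show ?case by (auto simp add: mult_nth)
  next
    case (gen_inv A) then show ?case using gen_det[OF assms(1)] by (auto simp add: minv_det)
  qed
  have "mob_act A Inf \<in> {Inf, Pt 0 0}" if "A \<in> gen_subgroup S" for A
    using z[OF that] by (auto simp add: Let_def)
  then have "(\<lambda>A. mob_act A Inf) ` gen_subgroup S \<subseteq> {Inf, Pt 0 0}" by auto
  then have "finite ((\<lambda>A. mob_act A Inf) ` gen_subgroup S)" using finite_subset by blast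
  moreover have "Inf \<in> hbar" by (auto simp: hbar_def)
  ultimately show ?thesis unfolding elementary_def by blast
qed

lemma conj_g: "a*d - b*c = 1 \<Longrightarrow> mat2 a b c d ** mat2 l 0 0 m ** matrix_inv (mat2 a b c d)
   = mat2 (a*d*l - b*c*m) (a*b*(m-l)) (c*d*(l-m)) (a*d*m - b*c*l)"
  apply (subst minv2, assumption)
  apply (simp add: mat2_mult mat2_eq algebra_simps)
  by (metis (no_types) mult.assoc ring_class.ring_distribs(2) mult_1_left)

lemma conj_diag: "s*t = 1 \<Longrightarrow> mat2 s 0 0 t ** mat2 a b c d ** mat2 t 0 0 s = mat2 a (s * s * b) (t * t * c) d"
  by (simp add: mat2_mult mat2_eq algebra_simps)

lemma lam_facts:
  fixes l :: complex assumes "cmod l > 1"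
  shows "l \<noteq> 0" "l * inverse l = 1" "cmod (inverse l) < 1" "l \<noteq> inverse l" "l + inverse l \<noteq> 0"
proof -
  show l0: "l \<noteq> 0" using assms by auto
  then show "l * inverse l = 1" by simp
  show "cmod (inverse l) < 1" using assms by (simp add: norm_inverse inverse_less_1_iff)
  show "l \<noteq> inverse l"
  proof
    assume "l = inverse l" then have "cmod l = inverse (cmod l)" by (metis norm_inverse)
    then show False using assms by (metis inverse_less_1_iff less_trans norm_inverse zero_less_one \<open>cmod (inverse l) < 1\<close> less_irrefl)
  qed
  show "l + inverse l \<noteq> 0"
  proof
    assume "l + inverse l = 0" then have "l = - inverse l" by (simp add: eq_neg_iff_add_eq_0)
    then have "cmod l = cmod (inverse l)" by (metis norm_minus_cancel)
    then show False using assms \<open>cmod (inverse l) < 1\<close> by simp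
  qed
qed

lemma gen_closed: "A \<in> gen_subgroup S \<Longrightarrow> B \<in> gen_subgroup S \<Longrightarrow> A ** B \<in> gen_subgroup S"
  "A \<in> gen_subgroup S \<Longrightarrow> matrix_inv A \<in> gen_subgroup S"
  by (auto intro: gen_subgroup.intros)

lemma gpow:
  assumes "mat2 l 0 0 (inverse l) \<in> gen_subgroup S" "l \<noteq> 0"
  shows "mat2 (l^n) 0 0 (inverse l^n) \<in> gen_subgroup S" "mat2 (inverse l^n) 0 0 (l^n) \<in> gen_subgroup S"
proof -
  show a: "mat2 (l^n) 0 0 (inverse l^n) \<in> gen_subgroup S"
  proof (induction n)
    case 0 then show ?case using gen_subgroup.gen_one[of S] by (simp add: mat2_one)
  next
    case (Suc n)
    have "mat2 (l^n) 0 0 (inverse l^n) ** mat2 l 0 0 (inverse l) \<in> gen_subgroup S"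
      by (rule gen_closed(1)[OF Suc assms(1)])
    then show ?case by (simp add: mat2_mult mult.commute)
  qed
  have "matrix_inv (mat2 (l^n) 0 0 (inverse l^n)) \<in> gen_subgroup S" using a by (rule gen_closed)
  moreover have "l^n * inverse l^n = 1" using assms(2) by (simp add: power_inverse[symmetric] power_mult_distrib[symmetric])
  ultimately show "mat2 (inverse l^n) 0 0 (l^n) \<in> gen_subgroup S" by (simp add: minv2)
qed

lemma K:
  assumes S: "S \<subseteq> SL2C" "mat2 l 0 0 (inverse l) \<in> S" and l: "cmod l > 1"
    and f: "mat2 a b c d \<in> gen_subgroup S" "a*d - b*c = 1" "b \<noteq> 0" "c \<noteq> 0" "a*d = 0" "\<not>(a=0 \<and> d=0)"
  shows "\<not> discrete_group (gen_subgroup S)"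
proof -
  define m where "m = inverse l"
  note lf = lam_facts[OF l, folded m_def]
  have g: "mat2 l 0 0 m \<in> gen_subgroup S" using S(2) by (auto simp: m_def intro: gen_subgroup.intros)
  have F: "mat2 (a*d*l - b*c*m) (a*b*(m-l)) (c*d*(l-m)) (a*d*m - b*c*l) \<in> gen_subgroup S"
    using gen_closed(1)[OF gen_closed(1)[OF f(1) g] gen_closed(2)[OF f(1)]] conj_g[OF f(2)] by simp
  have gi: "mat2 m 0 0 l \<in> gen_subgroup S" using gen_closed(2)[OF g] minv2[of l m 0 0] lf by simp
  have bc: "b*c = -1" using f(2,5) by (metis add.inverse_inverse diff_0 mult.commute)
  have mn: "(\<lambda>n. m^n) \<longlonglongrightarrow> 0" using lf(3) by (intro LIMSEQ_power_zero)
  show ?thesis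
  proof (cases "a = 0")
    case True
    then have d: "d \<noteq> 0" using f by auto
    define \<gamma> where "\<gamma> = c*d*(l-m)"
    have \<gamma>: "\<gamma> \<noteq> 0" using d f lf by (simp add: \<gamma>_def)
    have F': "mat2 m 0 \<gamma> l \<in> gen_subgroup S" using F True bc by (simp add: \<gamma>_def)
    define Z where "Z n = mat2 m 0 (m^n*m^n*\<gamma>) l" for n
    have "Z n \<in> gen_subgroup S" for n
    proof -
      have "mat2 (l^n) 0 0 (m^n) ** mat2 m 0 \<gamma> l ** mat2 (m^n) 0 0 (l^n) \<in> gen_subgroup S"
        using gpow[OF S(2)[THEN gen_base] lf(1), folded m_def] F' by (intro gen_closed) 
      moreover have "l^n * m^n = 1" using lf by (simp add: power_mult_distrib[symmetric])
      ultimately show ?thesis by (simp add: conj_diag Z_def)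
    qed
    moreover have "Z n \<noteq> mat2 m 0 0 l" for n using \<gamma> lf by (simp add: Z_def mat2_eq m_def)
    moreover have "Z \<longlonglongrightarrow> mat2 m 0 0 l"
      unfolding Z_def using mn by (intro mat2_tendsto tendsto_intros) (auto intro: tendsto_mult_left_zero tendsto_mult_zero)
    ultimately show ?thesis using nondisc gi by blast
  next
    case False
    then have d: "d = 0" using f by auto
    define \<beta> where "\<beta> = a*b*(m-l)"
    have \<beta>: "\<beta> \<noteq> 0" using False f lf by (simp add: \<beta>_def)
    have F': "mat2 m \<beta> 0 l \<in> gen_subgroup S" using F d bc by (simp add: \<beta>_def)
    define Z where "Z n = mat2 m (m^n*m^n*\<beta>) 0 l" for n
    have "Z n \<in> gen_subgroup S" for n
    proof -
      have "mat2 (m^n) 0 0 (l^n) ** mat2 m \<beta> 0 l ** mat2 (l^n) 0 0 (m^n) \<in> gen_subgroup S"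
        using gpow[OF S(2)[THEN gen_base] lf(1), folded m_def] F' by (intro gen_closed) 
      moreover have "m^n * l^n = 1" using lf by (simp add: power_mult_distrib[symmetric] mult.commute)
      ultimately show ?thesis by (simp add: conj_diag Z_def)
    qed
    moreover have "Z n \<noteq> mat2 m 0 0 l" for n using \<beta> lf by (simp add: Z_def mat2_eq m_def)
    moreover have "Z \<longlonglongrightarrow> mat2 m 0 0 l"
      unfolding Z_def using mn by (intro mat2_tendsto tendsto_intros) (auto intro: tendsto_mult_left_zero tendsto_mult_zero)
    ultimately show ?thesis using nondisc gi by blast
  qed
qed

lemma choose_k:
  fixes r t :: real assumes "r > 1" "t > 0"
  shows "\<exists>k::int. t \<le> r powi k \<and> r powi k < r * t"
proof -
  define k where "k = \<lceil>log r t\<rceil>"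
  have e: "r powr real_of_int k = r powi k" using assms by (intro powr_real_of_int') auto
  have "t = r powr (log r t)" using assms by simp
  also have "\<dots> \<le> r powr real_of_int k" using assms unfolding k_def by (intro powr_mono) auto
  finally have 1: "t \<le> r powi k" using e by simp
  have "r powr (real_of_int k - 1) < r powr (log r t)" using assms unfolding k_def
    by (subst powr_less_cancel_iff) linarith+
  also have "\<dots> = t" using assms by simp
  finally have "r * r powr (real_of_int k - 1) < r * t" using assms by simp
  moreover have "r * r powr (real_of_int k - 1) = r powr real_of_int k"
    using assms by (simp add: powr_diff)
  ultimately show ?thesis using 1 e by auto
qed

lemma gpowi:
  assumes "mat2 l 0 0 (inverse l) \<in> gen_subgroup S" "l \<noteq> 0"
  shows "mat2 (l powi k) 0 0 (inverse l powi k) \<in> gen_subgroup S"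
proof (cases "k \<ge> 0")
  case True then show ?thesis using gpow(1)[OF assms, of "nat k"] by (simp add: power_int_def)
next
  case False then show ?thesis using gpow(2)[OF assms, of "nat (-k)"] by (simp add: power_int_def)
qed

fun stp :: "complex \<Rightarrow> complex \<times> complex \<times> complex \<times> complex \<Rightarrow> complex \<times> complex \<times> complex \<times> complex" where
  "stp l (a,b,c,d) = (a*d*l - b*c*inverse l, a*b*(inverse l - l), c*d*(l - inverse l), a*d*inverse l - b*c*l)"

definition "qA l q n = fst ((stp l ^^ n) q)"
definition "qB l q n = fst (snd ((stp l ^^ n) q))"
definition "qC l q n = fst (snd (snd ((stp l ^^ n) q)))"
definition "qD l q n = snd (snd (snd ((stp l ^^ n) q)))"

lemma q0: "qA l (a,b,c,d) 0 = a" "qB l (a,b,c,d) 0 = b" "qC l (a,b,c,d) 0 = c" "qD l (a,b,c,d) 0 = d"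
  by (simp_all add: qA_def qB_def qC_def qD_def)

lemma qSuc:
  "qA l q (Suc n) = qA l q n * qD l q n * l - qB l q n * qC l q n * inverse l"
  "qB l q (Suc n) = qA l q n * qB l q n * (inverse l - l)"
  "qC l q (Suc n) = qC l q n * qD l q n * (l - inverse l)"
  "qD l q (Suc n) = qA l q n * qD l q n * inverse l - qB l q n * qC l q n * l"
  by (cases "(stp l ^^ n) q" rule: prod_cases4; simp add: qA_def qB_def qC_def qD_def)+

lemma alg1:
  fixes a b c d l m :: complex
  assumes "l*m = 1" "a*d - b*c = 1"
  shows "(a*d*l - b*c*m)*(a*d*m - b*c*l) - (a*b*(m-l))*(c*d*(l-m)) = 1"
  using assms by algebra

lemma alg2:
  fixes a b c d l m :: complex
  assumes "l*m = 1" "a*d - b*c = 1"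
  shows "(a*d*l - b*c*m)*(a*b*(m-l))*(c*d*(l-m))*(a*d*m - b*c*l) = - ((l-m)^2 * (a*b*c*d)) * (1 - (l-m)^2*(a*b*c*d))"
  using assms by algebra

lemma alg3:
  fixes a b c d l m :: complex
  assumes "l*m = 1" "a*d - b*c = 1"
  shows "a*d*l - b*c*m = l + b*c*(l-m)" "a*d*m - b*c*l = m - b*c*(l-m)"
  using assms by algebra+

theorem theorem2:
  fixes lam a b c d :: complex
  assumes "cmod lam > 1"
    and "mat2 a b c d \<in> SL2C"
    and "cmod (lam - 1) + cmod (inverse lam - 1) < 1"
    and "sqrt (cmod (a*b*c*d)) \<le>
           (1 - (cmod (lam - 1) + cmod (inverse lam - 1))) / (cmod (lam - 1) + cmod (inverse lam - 1))\<^sup>2"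
  shows "elementary (gen_subgroup {mat2 lam 0 0 (inverse lam), mat2 a b c d})
         \<or> \<not> discrete_group (gen_subgroup {mat2 lam 0 0 (inverse lam), mat2 a b c d})"
proof -
  define m where "m = inverse lam"
  note lf = lam_facts[OF assms(1), folded m_def]
  define S where "S = {mat2 lam 0 0 m, mat2 a b c d}"
  define G where "G = gen_subgroup S"
  have hdet: "a*d - b*c = 1" using assms(2) by (simp add: SL2C_def mat2_det)
  have SS: "S \<subseteq> SL2C" using hdet lf assms(2) by (auto simp: S_def SL2C_def mat2_det)
  have gS: "mat2 lam 0 0 (inverse lam) \<in> S" by (simp add: S_def m_def)
  have gG: "mat2 lam 0 0 m \<in> G" by (auto simp: S_def G_def intro: gen_base)
  have hG: "mat2 a b c d \<in> G" by (auto simp: S_def G_def intro: gen_base)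
  define q where "q = (a,b,c,d)"
  define A where "A = qA lam q"
  define B where "B = qB lam q"
  define C where "C = qC lam q"
  define D where "D = qD lam q"
  have rA: "A (Suc n) = A n * D n * lam - B n * C n * m" for n
    unfolding A_def B_def C_def D_def m_def by (rule qSuc)
  have rB: "B (Suc n) = A n * B n * (m - lam)" for n
    unfolding A_def B_def C_def D_def m_def by (rule qSuc)
  have rC: "C (Suc n) = C n * D n * (lam - m)" for n
    unfolding A_def B_def C_def D_def m_def by (rule qSuc)
  have rD: "D (Suc n) = A n * D n * m - B n * C n * lam" for n
    unfolding A_def B_def C_def D_def m_def by (rule qSuc)
  have i0: "A 0 = a" "B 0 = b" "C 0 = c" "D 0 = d"
    by (simp_all add: A_def B_def C_def D_def q_def q0)
  have det: "A n * D n - B n * C n = 1" for n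
  proof (induction n)
    case 0 then show ?case using hdet by (simp add: i0)
  next
    case (Suc n) then show ?case unfolding rA rB rC rD using alg1[OF lf(2)] by blast
  qed
  have inG: "mat2 (A n) (B n) (C n) (D n) \<in> G" for n
  proof (induction n)
    case 0 then show ?case using hG by (simp add: i0)
  next
    case (Suc n)
    have "mat2 (A n) (B n) (C n) (D n) ** mat2 lam 0 0 m ** matrix_inv (mat2 (A n) (B n) (C n) (D n)) \<in> G"
      using Suc gG unfolding G_def by (intro gen_closed)
    then show ?case using conj_g[OF det[of n], of lam m] by (simp add: rA rB rC rD)
  qed
  define P where "P n = A n * B n * C n * D n" for n
  define E where "E = (lam - m)^2"
  have Prec: "P (Suc n) = - (E * P n) * (1 - E * P n)" for n
    unfolding P_def E_def rA rB rC rD using alg2[OF lf(2) det[of n]] by simp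
  have A2: "A (Suc n) = lam + B n * C n * (lam - m)" for n
    unfolding rA using alg3(1)[OF lf(2) det[of n]] by simp
  have D2: "D (Suc n) = m - B n * C n * (lam - m)" for n
    unfolding rD using alg3(2)[OF lf(2) det[of n]] by simp
  have BC: "B (Suc n) * C (Suc n) = - (E * P n)" for n
    unfolding rB rC P_def E_def by (simp add: power2_eq_square algebra_simps)
  have main: "elementary G \<or> \<not> discrete_group G"
  proof (cases "\<exists>n. P n = 0")
    case True
    define N where "N = (LEAST n. P n = 0)"
    have PN: "P N = 0" unfolding N_def using True by (rule LeastI_ex)
    have Pl: "k < N \<Longrightarrow> P k \<noteq> 0" for k unfolding N_def by (rule not_less_Least)
    show ?thesis
    proof (cases N)
      case 0
      then have "a*b*c*d = 0" using PN by (simp add: P_def i0)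
      then consider "b = 0" | "c = 0" | "a = 0 \<and> d = 0" | "b \<noteq> 0 \<and> c \<noteq> 0 \<and> a*d = 0 \<and> \<not>(a = 0 \<and> d = 0)"
        by fastforce
      then show ?thesis
      proof cases
        case 1 then show ?thesis using elem_b0[OF SS] by (simp add: S_def G_def)
      next
        case 2 then show ?thesis using elem_c0[OF SS] by (simp add: S_def G_def)
      next
        case 3 then show ?thesis using elem_swap[OF SS] by (simp add: S_def G_def)
      next
        case 4 then show ?thesis using K[OF SS gS assms(1) hG[unfolded G_def] hdet] by (simp add: G_def)
      qed
    next
      case (Suc k)
      then have "P k \<noteq> 0" using Pl by simp
      then have nz: "A k \<noteq> 0" "B k \<noteq> 0" "C k \<noteq> 0" "D k \<noteq> 0" by (auto simp: P_def)
      have bN: "B N \<noteq> 0" "C N \<noteq> 0" using nz lf(4) by (auto simp: Suc rB rC)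
      then have ad0: "A N * D N = 0" using PN by (auto simp: P_def)
      have "A N + D N = lam + m" by (simp add: Suc A2 D2)
      then have "\<not> (A N = 0 \<and> D N = 0)" using lf(5) m_def by auto
      then show ?thesis using K[OF SS gS assms(1) inG[of N, unfolded G_def] det[of N] bN ad0] by (simp add: G_def)
    qed
  next
    case False
    then have Pnz: "P n \<noteq> 0" for n by auto
    then have nz: "A n \<noteq> 0" "B n \<noteq> 0" "C n \<noteq> 0" "D n \<noteq> 0" for n by (auto simp: P_def)
    define M where "M = cmod (lam - 1) + cmod (inverse lam - 1)"
    have lam1: "lam \<noteq> 1" using assms(1) by auto
    have M0: "0 < M" using lam1 by (simp add: M_def add_pos_nonneg)
    have M1: "M < 1" using assms(3) by (simp add: M_def)
    have lmM: "cmod (lam - m) \<le> M"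
    proof -
      have "lam - m = (lam - 1) - (m - 1)" by simp
      then have "cmod (lam - m) \<le> cmod (lam - 1) + cmod (m - 1)" by (metis norm_triangle_ineq4)
      then show ?thesis by (simp add: M_def m_def)
    qed
    define \<epsilon> where "\<epsilon> = cmod E"
    have eps: "\<epsilon> = (cmod (lam - m))^2" by (simp add: \<epsilon>_def E_def norm_power)
    have eps0: "0 < \<epsilon>" using lf(4) by (simp add: eps)
    have epsM: "\<epsilon> \<le> M^2" unfolding eps using lmM by (intro power_mono) auto
    have P0: "cmod (P 0) \<le> ((1-M)/M^2)^2"
    proof -
      have "sqrt (cmod (P 0)) \<le> (1-M)/M^2" using assms(4) by (simp add: P_def i0 M_def)
      then have "(sqrt (cmod (P 0)))^2 \<le> ((1-M)/M^2)^2" by (intro power_mono) auto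
      then show ?thesis by simp
    qed
    define u where "u n = \<epsilon> * cmod (P n)" for n
    have u0: "0 \<le> u n" for n using eps0 by (simp add: u_def)
    have ustep: "u (Suc n) \<le> \<epsilon> * u n * (1 + u n)" for n
    proof -
      have "cmod (1 - E * P n) \<le> 1 + u n"
        using norm_triangle_ineq4[of 1 "E * P n"] by (simp add: u_def \<epsilon>_def norm_mult)
      then have "cmod (P (Suc n)) \<le> \<epsilon> * cmod (P n) * (1 + u n)"
        unfolding Prec by (simp add: norm_mult \<epsilon>_def mult_left_mono)
      then have "\<epsilon> * cmod (P (Suc n)) \<le> \<epsilon> * (\<epsilon> * cmod (P n) * (1 + u n))"
        using eps0 by (intro mult_left_mono) auto
      then show ?thesis by (simp add: u_def mult_ac)
    qed
    define qq where "qq = \<epsilon> * (1 + u 0)"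
    have qq0: "0 \<le> qq" using eps0 u0 by (simp add: qq_def)
    have qq1: "qq < 1"
    proof -
      have "\<epsilon> * u 0 = \<epsilon> * (\<epsilon> * cmod (P 0))" by (simp add: u_def)
      also have "\<dots> \<le> M^2 * (M^2 * ((1-M)/M^2)^2)"
        using epsM eps0 P0 by (intro mult_mono) (auto intro: mult_mono)
      also have "\<dots> = (1-M)^2" using M0 by (simp add: field_simps power2_eq_square)
      finally have "\<epsilon> * u 0 \<le> (1-M)^2" .
      then have "qq \<le> M^2 + (1-M)^2" using epsM by (simp add: qq_def algebra_simps)
      also have "\<dots> < 1" using M0 M1 by (simp add: power2_eq_square algebra_simps)
      finally show ?thesis .
    qed
    have ub: "u n \<le> qq^n * u 0" for n
    proof (induction n)
      case 0 then show ?case by simp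
    next
      case (Suc n)
      have "qq^n \<le> 1" using qq0 qq1 by (intro power_le_one) auto
      then have "qq^n * u 0 \<le> 1 * u 0" using u0[of 0] by (intro mult_right_mono) auto
      then have "u n \<le> u 0" using Suc by linarith
      then have "\<epsilon> * u n * (1 + u n) \<le> \<epsilon> * u n * (1 + u 0)"
        using eps0 u0[of n] by (intro mult_left_mono) auto
      also have "\<dots> = qq * u n" by (simp add: qq_def mult_ac)
      also have "\<dots> \<le> qq * (qq^n * u 0)" using Suc qq0 by (intro mult_left_mono) auto
      finally show ?case using ustep[of n] by simp
    qed
    have Pt: "P \<longlonglongrightarrow> 0"
    proof (rule Lim_null_comparison)
      show "\<forall>\<^sub>F n in sequentially. norm (P n) \<le> qq^n * cmod (P 0)"
      proof (rule always_eventually, rule allI)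
        fix n
        have "\<epsilon> * cmod (P n) \<le> \<epsilon> * (qq^n * cmod (P 0))" using ub[of n] by (simp add: u_def mult_ac)
        then show "norm (P n) \<le> qq^n * cmod (P 0)" using eps0 by simp
      qed
      show "(\<lambda>n. qq^n * cmod (P 0)) \<longlonglongrightarrow> 0"
        using qq0 qq1 by (intro tendsto_mult_left_zero LIMSEQ_realpow_zero)
    qed
    define x where "x n = B (Suc (Suc n)) * C (Suc (Suc n))" for n
    have xt: "x \<longlonglongrightarrow> 0"
    proof -
      have "(\<lambda>n. P (Suc n)) \<longlonglongrightarrow> 0" using Pt by (rule LIMSEQ_Suc)
      then have "(\<lambda>n. - (E * P (Suc n))) \<longlonglongrightarrow> - (E * 0)" by (intro tendsto_intros)
      moreover have "x = (\<lambda>n. - (E * P (Suc n)))" by (simp add: x_def BC fun_eq_iff)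
      ultimately show ?thesis by simp
    qed
    have At: "(\<lambda>n. A (Suc (Suc n))) \<longlonglongrightarrow> lam"
    proof -
      have "(\<lambda>n. lam + - (E * P n) * (lam - m)) \<longlonglongrightarrow> lam + - (E * 0) * (lam - m)"
        using Pt by (intro tendsto_intros)
      then show ?thesis by (simp add: A2 BC)
    qed
    have Dt: "(\<lambda>n. D (Suc (Suc n))) \<longlonglongrightarrow> m"
    proof -
      have "(\<lambda>n. m - - (E * P n) * (lam - m)) \<longlonglongrightarrow> m - - (E * 0) * (lam - m)"
        using Pt by (intro tendsto_intros)
      then show ?thesis by (simp add: D2 BC)
    qed
    define R where "R = cmod lam"
    have R1: "R * R > 1" using assms(1) unfolding R_def by (metis less_1_mult order.strict_trans zero_less_one)
    define sx where "sx n = sqrt (cmod (x n))" for n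
    have xnz: "x n \<noteq> 0" for n using nz by (simp add: x_def)
    have sx0: "sx n > 0" for n using xnz by (simp add: sx_def)
    have "\<forall>n. \<exists>k::int. sx n / cmod (B (Suc (Suc n))) \<le> (R*R) powi k \<and> (R*R) powi k < (R*R) * (sx n / cmod (B (Suc (Suc n))))"
    proof
      fix n
      have "sx n / cmod (B (Suc (Suc n))) > 0" using sx0[of n] nz(2)[of "Suc (Suc n)"] by simp
      then show "\<exists>k::int. sx n / cmod (B (Suc (Suc n))) \<le> (R*R) powi k \<and> (R*R) powi k < (R*R) * (sx n / cmod (B (Suc (Suc n))))"
        using choose_k R1 by blast
    qed
    then obtain kk where kk: "\<And>n. sx n / cmod (B (Suc (Suc n))) \<le> (R*R) powi kk n \<and> (R*R) powi kk n < (R*R) * (sx n / cmod (B (Suc (Suc n))))"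
      by metis
    define s where "s n = lam powi kk n" for n
    define t where "t n = m powi kk n" for n
    have st: "s n * t n = 1" for n using lf(2) by (simp add: s_def t_def power_int_mult_distrib[symmetric])
    have s0: "s n \<noteq> 0" for n using lf(1) by (simp add: s_def)
    define bb where "bb n = s n * s n * B (Suc (Suc n))" for n
    define cc where "cc n = t n * t n * C (Suc (Suc n))" for n
    define Z where "Z n = mat2 (A (Suc (Suc n))) (bb n) (cc n) (D (Suc (Suc n)))" for n
    have ZG: "Z n \<in> G" for n
    proof -
      have s1: "mat2 (s n) 0 0 (t n) \<in> G" unfolding s_def t_def m_def G_def
        using gpowi[OF gen_base[OF gS] lf(1)] .
      have "matrix_inv (mat2 (s n) 0 0 (t n)) \<in> G" using s1 unfolding G_def by (rule gen_closed)
      then have s2: "mat2 (t n) 0 0 (s n) \<in> G" using minv2[of "s n" "t n" 0 0] st[of n] by simp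
      have "mat2 (s n) 0 0 (t n) ** mat2 (A (Suc (Suc n))) (B (Suc (Suc n))) (C (Suc (Suc n))) (D (Suc (Suc n))) ** mat2 (t n) 0 0 (s n) \<in> G"
        using s1 s2 inG unfolding G_def by (intro gen_closed)
      then show ?thesis using conj_diag[OF st[of n]] by (simp add: Z_def bb_def cc_def)
    qed
    have Zne: "Z n \<noteq> mat2 lam 0 0 m" for n using s0 nz by (simp add: Z_def mat2_eq bb_def)
    have bbn: "sx n \<le> cmod (bb n) \<and> cmod (bb n) < (R*R) * sx n" for n
    proof -
      have e: "cmod (bb n) = cmod (B (Suc (Suc n))) * (R*R) powi kk n"
        by (simp add: bb_def s_def norm_mult norm_power_int R_def power_int_mult_distrib)
      have bpos: "cmod (B (Suc (Suc n))) > 0" using nz by simp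
      from kk[of n] bpos show ?thesis unfolding e
        by (simp add: divide_le_eq pos_less_divide_eq field_simps)
    qed
    have ccn: "cmod (cc n) \<le> sx n" for n
    proof -
      have "bb n * cc n = (s n * t n) * (s n * t n) * x n" by (simp add: bb_def cc_def x_def mult_ac)
      then have "bb n * cc n = x n" using st by simp
      then have "cmod (cc n) * cmod (bb n) = cmod (x n)"
        by (metis norm_mult mult.commute)
      also have "\<dots> = sx n * sx n" by (simp add: sx_def)
      finally have 1: "cmod (cc n) * cmod (bb n) = sx n * sx n" .
      have "cmod (cc n) * sx n \<le> cmod (cc n) * cmod (bb n)"
        using bbn[of n] by (intro mult_left_mono) auto
      then have "cmod (cc n) * sx n \<le> sx n * sx n" using 1 by simp
      then show ?thesis using sx0[of n] by simp
    qed
    have sxt: "sx \<longlonglongrightarrow> 0"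
    proof -
      have "(\<lambda>n. sqrt (cmod (x n))) \<longlonglongrightarrow> sqrt (cmod 0)" using xt by (intro tendsto_intros)
      then show ?thesis unfolding sx_def[abs_def] by simp
    qed
    have bbt: "bb \<longlonglongrightarrow> 0"
    proof (rule Lim_null_comparison)
      show "\<forall>\<^sub>F n in sequentially. norm (bb n) \<le> (R*R) * sx n"
        using bbn by (intro always_eventually allI) (simp add: less_imp_le)
      show "(\<lambda>n. (R*R) * sx n) \<longlonglongrightarrow> 0" using sxt by (intro tendsto_mult_right_zero)
    qed
    have cct: "cc \<longlonglongrightarrow> 0"
      by (rule Lim_null_comparison[OF always_eventually sxt]) (use ccn in auto)
    have "Z \<longlonglongrightarrow> mat2 lam 0 0 m" unfolding Z_def using At bbt cct Dt by (rule mat2_tendsto)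
    then show ?thesis using nondisc[of Z G "mat2 lam 0 0 m", OF ZG gG Zne] by blast
  qed
  then show ?thesis by (simp add: G_def S_def m_def)
qed
end
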